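(* For each $n$ let $\rho^{(n)}$ be a state and $X^{(n)}=(X^{(n)}_1,\dots,X^{(n)}_d)$ observables on a finite-dimensional Hilbert space, let $W^{(n)}(\xi):=e^{\sqrt{-1}\xi^iX^{(n)}_i}$ for $\xi\in\mathbb R^d$, and assume $(X^{(n)},\rho^{(n)})\rightsquigarrow N(0,J)$ for a complex positive semidefinite $d\times d$ matrix $J$. Then, with $S:=\mathrm{Im}\,J$, $\lim_{n\to\infty}\big\|W^{(n)}(\xi)W^{(n)}(\eta)\sqrt{\rho^{(n)}}-e^{\sqrt{-1}\xi^\top S\eta}W^{(n)}(\xi+\eta)\sqrt{\rho^{(n)}}\big\|_{\mathrm{HS}}=0$ for all $\xi,\eta\in\mathbb R^d$, where $\|\cdot\|_{\mathrm{HS}}$ is the Hilbert–Schmidt norm.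
   Context: Summation convention. $N(0,J)$ is the quantum Gaussian state on $\mathrm{CCR}(\mathrm{Im}J)$ (generated by $e^{\sqrt{-1}\xi^iX_i}$ with $e^{\sqrt{-1}\xi^iX_i}e^{\sqrt{-1}\eta^jX_j}=e^{\sqrt{-1}\xi^\top(\mathrm{Im}J)\eta}e^{\sqrt{-1}(\xi+\eta)^iX_i}$) with $\phi(\prod_{t=1}^Te^{\sqrt{-1}\xi_t^iX_i})=\exp(-\tfrac12\sum_t\xi_t^i\xi_t^jJ_{ji}-\sum_{t<u}\xi_t^i\xi_u^jJ_{ji})$; $(X^{(n)},\rho^{(n)})\rightsquigarrow N(0,J)$ means $\mathrm{Tr}\,\rho^{(n)}\prod_te^{\sqrt{-1}\xi_t^iX^{(n)}_i}$ converges to these values for all $T$ and $\xi_1,\dots,\xi_T\in\mathbb R^d$. *)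

theory Defs
  imports Complex_Main "Jordan_Normal_Form.Matrix"
begin

text \<open>Vectors xi in R^d are represented as
functions nat => real of which only the components i < d are used.\<close>

definition adj :: "complex mat \<Rightarrow> complex mat" where
  "adj A = mat (dim_col A) (dim_row A) (\<lambda>(i,j). cnj (A $$ (j,i)))"

definition hermitian :: "complex mat \<Rightarrow> bool" where
  "hermitian A \<longleftrightarrow> dim_row A = dim_col A \<and> adj A = A"

definition qform :: "complex mat \<Rightarrow> (nat \<Rightarrow> complex) \<Rightarrow> complex" where
  "qform A v = (\<Sum>i<dim_row A. \<Sum>j<dim_col A. cnj (v i) * A $$ (i,j) * v j)"

definition psd :: "complex mat \<Rightarrow> bool" where
  "psd A \<longleftrightarrow> hermitian A \<and> (\<forall>v. qform A v \<in> \<real> \<and> Re (qform A v) \<ge> 0)"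

definition mtrace :: "complex mat \<Rightarrow> complex" where
  "mtrace A = (\<Sum>i<dim_row A. A $$ (i,i))"

definition is_state :: "complex mat \<Rightarrow> bool" where
  "is_state \<rho> \<longleftrightarrow> psd \<rho> \<and> mtrace \<rho> = 1"

definition mat_exp :: "complex mat \<Rightarrow> complex mat" where
  "mat_exp A = mat (dim_row A) (dim_col A)
     (\<lambda>(i,j). \<Sum>k. (A ^\<^sub>m k) $$ (i,j) / of_nat (fact k))"

definition mat_sqrt :: "complex mat \<Rightarrow> complex mat" where
  "mat_sqrt A = (THE B. B \<in> carrier_mat (dim_row A) (dim_row A) \<and> psd B \<and> B * B = A)"

definition hs_norm :: "complex mat \<Rightarrow> real" where
  "hs_norm A = sqrt (\<Sum>i<dim_row A. \<Sum>j<dim_col A. (cmod (A $$ (i,j)))\<^sup>2)"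

definition weyl :: "nat \<Rightarrow> nat \<Rightarrow> (nat \<Rightarrow> complex mat) \<Rightarrow> (nat \<Rightarrow> real) \<Rightarrow> complex mat" where
  "weyl d m X \<xi> = mat_exp (foldr (\<lambda>i M. ((\<i> * complex_of_real (\<xi> i)) \<cdot>\<^sub>m X i) + M) [0..<d] (0\<^sub>m m m))"

definition weyl_prod :: "nat \<Rightarrow> nat \<Rightarrow> (nat \<Rightarrow> complex mat) \<Rightarrow> (nat \<Rightarrow> real) list \<Rightarrow> complex mat" where
  "weyl_prod d m X \<xi>s = foldr (\<lambda>\<xi> M. weyl d m X \<xi> * M) \<xi>s (1\<^sub>m m)"

definition bil :: "nat \<Rightarrow> complex mat \<Rightarrow> (nat \<Rightarrow> real) \<Rightarrow> (nat \<Rightarrow> real) \<Rightarrow> complex" where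
  "bil d J \<xi> \<eta> = (\<Sum>i<d. \<Sum>j<d. complex_of_real (\<xi> i) * complex_of_real (\<eta> j) * J $$ (j,i))"

text \<open>Value of the quantum Gaussian state N(0,J) on a product of Weyl operators.\<close>
definition gauss_val :: "nat \<Rightarrow> complex mat \<Rightarrow> (nat \<Rightarrow> real) list \<Rightarrow> complex" where
  "gauss_val d J \<xi>s = exp (- (1/2) * (\<Sum>t<length \<xi>s. bil d J (\<xi>s ! t) (\<xi>s ! t))
      - (\<Sum>t<length \<xi>s. \<Sum>u<length \<xi>s. if t < u then bil d J (\<xi>s ! t) (\<xi>s ! u) else 0))"

text \<open>Quantum local asymptotic normality-type convergence (X^(n), rho^(n)) ~> N(0,J).\<close>
definition qconv :: "nat \<Rightarrow> (nat \<Rightarrow> nat) \<Rightarrow> (nat \<Rightarrow> nat \<Rightarrow> complex mat) \<Rightarrow> (nat \<Rightarrow> complex mat) \<Rightarrow> complex mat \<Rightarrow> bool" where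
  "qconv d m X \<rho> J \<longleftrightarrow> (\<forall>\<xi>s. (\<lambda>n. mtrace (\<rho> n * weyl_prod d (m n) (X n) \<xi>s))
       \<longlonglongrightarrow> gauss_val d J \<xi>s)"

end

theory Submission
  imports Defs "Jordan_Normal_Form.Schur_Decomposition"
begin


lemma pow_mat_Suc2: assumes "A \<in> carrier_mat n n" shows "A ^\<^sub>m Suc k = A * A ^\<^sub>m k"
proof (induction k)
  case 0 then show ?case using assms by (simp)
next
  case (Suc k)
  have "A ^\<^sub>m Suc (Suc k) = (A * A ^\<^sub>m k) * A" using Suc by (simp)
  also have "\<dots> = A * (A ^\<^sub>m k * A)" using assms by (intro assoc_mult_mat, auto)
  finally show ?case by (simp)
qed

lemma pow_mat_add: assumes "A \<in> carrier_mat n n" shows "A ^\<^sub>m (k + l) = A ^\<^sub>m k * A ^\<^sub>m l"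
proof (induction l)
  case 0 then show ?case using assms by (simp)
next
  case (Suc l)
  have "A ^\<^sub>m (k + Suc l) = (A ^\<^sub>m k * A ^\<^sub>m l) * A" using Suc by (simp)
  also have "\<dots> = A ^\<^sub>m k * (A ^\<^sub>m l * A)" using assms by (intro assoc_mult_mat, auto)
  finally show ?case by (simp)
qed

lemma adj_carrier[simp]: "A \<in> carrier_mat n m \<Longrightarrow> adj A \<in> carrier_mat m n"
  by (auto simp: adj_def)
lemma adj_dims[simp]: "dim_row (adj A) = dim_col A" "dim_col (adj A) = dim_row A"
  by (auto simp: adj_def)
lemma adj_index[simp]: "i < dim_col A \<Longrightarrow> j < dim_row A \<Longrightarrow> adj A $$ (i,j) = cnj (A $$ (j,i))"
  by (auto simp: adj_def)
lemma adj_adj[simp]: "adj (adj A) = A"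
  by (rule eq_matI, auto)
lemma adj_mult: assumes "A \<in> carrier_mat n k" "B \<in> carrier_mat k m"
  shows "adj (A * B) = adj B * adj A"
  using assms by (intro eq_matI, auto simp: scalar_prod_def mult.commute)
lemma adj_add: assumes "A \<in> carrier_mat n m" "B \<in> carrier_mat n m"
  shows "adj (A + B) = adj A + adj B"
  using assms by (intro eq_matI, auto)
lemma adj_minus: assumes "A \<in> carrier_mat n m" "B \<in> carrier_mat n m"
  shows "adj (A - B) = adj A - adj B"
  using assms by (intro eq_matI, auto)
lemma adj_smult: "adj (c \<cdot>\<^sub>m A) = cnj c \<cdot>\<^sub>m adj A"
  by (intro eq_matI, auto)
lemma adj_one[simp]: "adj (1\<^sub>m n) = 1\<^sub>m n"
  by (intro eq_matI, auto)
lemma adj_zero[simp]: "adj (0\<^sub>m n m) = 0\<^sub>m m n"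
  by (intro eq_matI, auto)
lemma adj_pow: assumes "A \<in> carrier_mat n n" shows "adj (A ^\<^sub>m k) = adj A ^\<^sub>m k"
proof (induction k)
  case (Suc k)
  have "adj (A ^\<^sub>m Suc k) = adj (A ^\<^sub>m k * A)" by (simp)
  also have "\<dots> = adj A * adj (A ^\<^sub>m k)" using assms by (intro adj_mult, auto)
  also have "\<dots> = adj A * adj A ^\<^sub>m k" using Suc by (simp)
  also have "\<dots> = adj A ^\<^sub>m k * adj A" using pow_mat_Suc2[OF adj_carrier[OF assms], of k] by (simp)
  finally show ?case by (simp)
qed (use assms in auto)

lemma mtrace_comm: assumes "A \<in> carrier_mat n m" "B \<in> carrier_mat m n"
  shows "mtrace (A * B) = mtrace (B * A)"
proof -
  have "mtrace (A * B) = (\<Sum>i<n. \<Sum>j<m. A $$ (i,j) * B $$ (j,i))"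
    using assms unfolding mtrace_def by (auto simp: scalar_prod_def atLeast0LessThan intro!: sum.cong)
  also have "\<dots> = (\<Sum>j<m. \<Sum>i<n. A $$ (i,j) * B $$ (j,i))" by (rule sum.swap)
  also have "\<dots> = mtrace (B * A)"
    using assms unfolding mtrace_def by (auto simp: scalar_prod_def atLeast0LessThan mult.commute intro!: sum.cong)
  finally show ?thesis .
qed

lemmas cmI = carrier_matI
lemma massoc: "dim_col A = dim_row B \<Longrightarrow> dim_col B = dim_row C \<Longrightarrow> (A * B) * C = A * (B * C)"
  by (rule assoc_mult_mat[OF cmI[OF refl refl] cmI[OF _ refl] cmI[OF _ refl]], auto)
lemma madd_mult: "dim_row A = dim_row B \<Longrightarrow> dim_col A = dim_col B \<Longrightarrow> dim_col A = dim_row C \<Longrightarrow>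
   (A + B) * C = A * C + B * C"
  by (rule add_mult_distrib_mat[OF cmI[OF refl refl] cmI cmI[OF _ refl]], auto)
lemma mmult_add: "dim_row B = dim_row C \<Longrightarrow> dim_col B = dim_col C \<Longrightarrow> dim_col A = dim_row B \<Longrightarrow>
   A * (B + C) = A * B + A * C"
  by (rule mult_add_distrib_mat[OF cmI[OF refl refl] cmI[OF _ refl] cmI], auto)
lemma msmult_mult: "dim_col A = dim_row B \<Longrightarrow> (c \<cdot>\<^sub>m A) * B = (c::complex) \<cdot>\<^sub>m (A * B)"
  by (rule mult_smult_assoc_mat[OF cmI[OF refl refl] cmI[OF _ refl]], auto)
lemma mmult_smult: "dim_col A = dim_row B \<Longrightarrow> A * (c \<cdot>\<^sub>m B) = (c::complex) \<cdot>\<^sub>m (A * B)"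
  by (rule mult_smult_distrib[OF cmI[OF refl refl] cmI[OF _ refl]], auto)
lemma mzero_add: "dim_row B = nr \<Longrightarrow> dim_col B = nc \<Longrightarrow> 0\<^sub>m nr nc + B = (B::complex mat)"
  by (intro eq_matI, auto)
lemma madd_zero: "dim_row B = nr \<Longrightarrow> dim_col B = nc \<Longrightarrow> B + 0\<^sub>m nr nc = (B::complex mat)"
  by (intro eq_matI, auto)
lemma mone_mult: "dim_row B = n \<Longrightarrow> 1\<^sub>m n * B = (B::complex mat)" by (simp)
lemma mmult_one: "dim_col B = n \<Longrightarrow> B * 1\<^sub>m n = (B::complex mat)" by (simp)
lemma mzero_mult: "dim_row B = n \<Longrightarrow> 0\<^sub>m m n * B = (0\<^sub>m m (dim_col B)::complex mat)"
  by (intro eq_matI, auto simp: scalar_prod_def)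
lemma mmult_zero: "dim_col B = n \<Longrightarrow> B * 0\<^sub>m n m = (0\<^sub>m (dim_row B) m::complex mat)"
  by (intro eq_matI, auto simp: scalar_prod_def)
lemma zero_smult_mat[simp]: "(0::complex) \<cdot>\<^sub>m A = 0\<^sub>m (dim_row A) (dim_col A)"
  by (intro eq_matI, auto)
lemma one_smult_mat[simp]: "(1::complex) \<cdot>\<^sub>m A = A"
  by (intro eq_matI, auto)
lemma smult_smult_mat[simp]: "(a::complex) \<cdot>\<^sub>m (b \<cdot>\<^sub>m A) = (a * b) \<cdot>\<^sub>m A"
  by (intro eq_matI, auto)
lemma smult_zero_mat'[simp]: "(a::complex) \<cdot>\<^sub>m 0\<^sub>m n m = 0\<^sub>m n m"
  by (intro eq_matI, auto)
lemma msmult_add: "dim_row A = dim_row B \<Longrightarrow> dim_col A = dim_col B \<Longrightarrow> (c::complex) \<cdot>\<^sub>m (A + B) = c \<cdot>\<^sub>m A + c \<cdot>\<^sub>m B"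
  by (intro eq_matI, auto simp: algebra_simps)
lemma madd_smult: "((a::complex) + b) \<cdot>\<^sub>m A = a \<cdot>\<^sub>m A + b \<cdot>\<^sub>m A"
  by (intro eq_matI, auto simp: algebra_simps)
lemma madd_comm: "dim_row A = dim_row B \<Longrightarrow> dim_col A = dim_col B \<Longrightarrow> A + B = B + (A::complex mat)"
  by (intro eq_matI, auto simp: algebra_simps)
lemma madd_assoc: "dim_row A = dim_row B \<Longrightarrow> dim_col A = dim_col B \<Longrightarrow> dim_row B = dim_row C \<Longrightarrow> dim_col B = dim_col C \<Longrightarrow> (A + B) + C = A + (B + (C::complex mat))"
  by (intro eq_matI, auto simp: algebra_simps)

lemmas mdist = massoc madd_mult mmult_add msmult_mult mmult_smult mzero_add madd_zero mone_mult mmult_one mzero_mult mmult_zero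


definition meval :: "complex mat \<Rightarrow> complex poly \<Rightarrow> complex mat" where
  "meval A p = foldr (\<lambda>c M. c \<cdot>\<^sub>m 1\<^sub>m (dim_row A) + A * M) (coeffs p) (0\<^sub>m (dim_row A) (dim_row A))"

lemma meval_dims_aux: "dim_row (foldr (\<lambda>c M. c \<cdot>\<^sub>m 1\<^sub>m (dim_row A) + A * M) cs (0\<^sub>m (dim_row A) (dim_row A))) = dim_row A
  \<and> dim_col (foldr (\<lambda>c M. c \<cdot>\<^sub>m 1\<^sub>m (dim_row A) + A * M) cs (0\<^sub>m (dim_row A) (dim_row A))) = dim_row A"
  by (induction cs, auto)

lemma meval_dims[simp]: "dim_row (meval A p) = dim_row A" "dim_col (meval A p) = dim_row A"
  using meval_dims_aux[of A "coeffs p"] by (auto simp: meval_def)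

lemma meval_0[simp]: "meval A 0 = 0\<^sub>m (dim_row A) (dim_row A)"
  by (simp add: meval_def)

lemma meval_pCons: assumes A: "A \<in> carrier_mat n n"
  shows "meval A (pCons a p) = a \<cdot>\<^sub>m 1\<^sub>m n + A * meval A p"
proof (cases "a = 0 \<and> p = 0")
  case True
  then show ?thesis using A by (auto simp: meval_def)
next
  case False
  then have "coeffs (pCons a p) = a # coeffs p" by (auto simp: cCons_def)
  then show ?thesis using A by (simp add: meval_def)
qed

lemma meval_carrier[simp]: assumes A: "A \<in> carrier_mat n n"
  shows "meval A p \<in> carrier_mat n n"
proof (induction p)
  case (pCons a p)
  then show ?case using A by (simp add: meval_pCons[OF A])
qed (use A in simp)

lemma meval_add: assumes A: "A \<in> carrier_mat n n"
  shows "meval A (p + q) = meval A p + meval A q"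
proof (induction p q rule: poly_induct2)
  case 0
  then show ?case using A by (simp)
next
  case (pCons a p b q)
  have "meval A (pCons a p + pCons b q) = (a + b) \<cdot>\<^sub>m 1\<^sub>m n + A * (meval A p + meval A q)"
    using pCons by (simp add: meval_pCons[OF A])
  also have "\<dots> = (a \<cdot>\<^sub>m 1\<^sub>m n + A * meval A p) + (b \<cdot>\<^sub>m 1\<^sub>m n + A * meval A q)"
    using A meval_carrier[OF A, of p] meval_carrier[OF A, of q] by (intro eq_matI, auto simp: scalar_prod_def algebra_simps sum.distrib)
  finally show ?case by (simp add: meval_pCons[OF A])
qed

lemma meval_smult: assumes A: "A \<in> carrier_mat n n"
  shows "meval A (smult c p) = c \<cdot>\<^sub>m meval A p"
proof (induction p)
  case 0
  then show ?case using A by (simp)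
next
  case (pCons a p)
  have "meval A (smult c (pCons a p)) = (c * a) \<cdot>\<^sub>m 1\<^sub>m n + A * (c \<cdot>\<^sub>m meval A p)"
    using pCons by (simp add: meval_pCons[OF A])
  also have "\<dots> = c \<cdot>\<^sub>m (a \<cdot>\<^sub>m 1\<^sub>m n + A * meval A p)"
    using A by (intro eq_matI, auto simp: scalar_prod_def algebra_simps sum.distrib sum_distrib_left)
  finally show ?case by (simp add: meval_pCons[OF A])
qed

lemma meval_mult: assumes A: "A \<in> carrier_mat n n"
  shows "meval A (p * q) = meval A p * meval A q"
proof (induction p)
  case 0
  then show ?case using A by (simp add: mdist carrier_matD)
next
  case (pCons a p)
  note D = carrier_matD[OF A]
  have "meval A (pCons a p * q) = meval A (smult a q) + meval A (pCons 0 (p * q))"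
    by (simp add: meval_add[OF A])
  also have "\<dots> = a \<cdot>\<^sub>m meval A q + (0 \<cdot>\<^sub>m 1\<^sub>m n + A * (meval A p * meval A q))"
    using pCons by (simp add: meval_smult[OF A] meval_pCons[OF A])
  also have "\<dots> = (a \<cdot>\<^sub>m 1\<^sub>m n + A * meval A p) * meval A q"
    using D by (simp add: mdist)
  finally show ?case by (simp add: meval_pCons[OF A])
qed

lemma meval_const: assumes A: "A \<in> carrier_mat n n" shows "meval A [:c:] = c \<cdot>\<^sub>m 1\<^sub>m n"
  using carrier_matD[OF A] by (simp add: meval_pCons[OF A] mdist)

lemma meval_x: assumes A: "A \<in> carrier_mat n n" shows "meval A [:0,1:] = A"
  using carrier_matD[OF A] by (simp add: meval_pCons[OF A] mdist)

lemma meval_commute: assumes A: "A \<in> carrier_mat n n"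
  shows "A * meval A p = meval A p * A"
proof (induction p)
  case 0
  then show ?case using carrier_matD[OF A] by (simp add: mdist)
next
  case (pCons a p)
  note D = carrier_matD[OF A]
  have "A * meval A (pCons a p) = a \<cdot>\<^sub>m A + A * (A * meval A p)"
    using D by (simp add: meval_pCons[OF A] mdist)
  also have "\<dots> = a \<cdot>\<^sub>m A + A * (meval A p * A)" using pCons by (simp)
  also have "\<dots> = meval A (pCons a p) * A"
    using D by (simp add: meval_pCons[OF A] mdist)
  finally show ?case .
qed

lemma meval_similar: assumes T: "T \<in> carrier_mat n n" and P: "P \<in> carrier_mat n n" and Q: "Q \<in> carrier_mat n n"
  and PQ: "P * Q = 1\<^sub>m n" and QP: "Q * P = 1\<^sub>m n"
  shows "meval (P * T * Q) p = P * meval T p * Q"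
proof (induction p)
  case 0
  then show ?case using carrier_matD[OF P] carrier_matD[OF Q] carrier_matD[OF T] by (simp add: mdist)
next
  case (pCons a p)
  note D = carrier_matD[OF P] carrier_matD[OF Q] carrier_matD[OF T]
  have A: "P * T * Q \<in> carrier_mat n n" using P T Q by (simp)
  have QPX: "Q * (P * X) = X" if "dim_row X = n" for X
    using that D by (simp add: massoc[symmetric] QP)
  have PQX: "P * (Q * X) = X" if "dim_row X = n" for X
    using that D by (simp add: massoc[symmetric] PQ)
  have "meval (P * T * Q) (pCons a p) = a \<cdot>\<^sub>m 1\<^sub>m n + (P * T * Q) * (P * meval T p * Q)"
    using pCons by (simp add: meval_pCons[OF A])
  also have "\<dots> = P * (a \<cdot>\<^sub>m 1\<^sub>m n + T * meval T p) * Q"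
    using D by (simp add: mdist QPX PQ)
  finally show ?case by (simp add: meval_pCons[OF T])
qed


lemma sum_single: assumes "finite S" "j \<in> S" "\<And>k. k \<in> S \<Longrightarrow> k \<noteq> j \<Longrightarrow> f k = 0"
  shows "sum f S = f j"
proof -
  have "sum f S = f j + sum f (S - {j})" using assms by (simp add: sum.remove)
  also have "sum f (S - {j}) = 0" using assms by (intro sum.neutral, auto)
  finally show ?thesis by (simp)
qed

lemma ut_mult: assumes A: "A \<in> carrier_mat n n" and B: "B \<in> carrier_mat n n"
  and uA: "upper_triangular A" and uB: "upper_triangular B"
  shows "upper_triangular (A * B)" "\<And>j. j < n \<Longrightarrow> (A * B) $$ (j,j) = A $$ (j,j) * B $$ (j,j)"
proof -
  have a: "A $$ (i,k) = 0" if "k < i" "i < n" for i k using uA A that by (auto simp: upper_triangular_def)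
  have b: "B $$ (i,k) = 0" if "k < i" "i < n" for i k using uB B that by (auto simp: upper_triangular_def)
  show "upper_triangular (A * B)"
  proof (rule upper_triangularI)
    fix i j assume ji: "j < i" and i: "i < dim_row (A * B)"
    have "(A * B) $$ (i,j) = (\<Sum>k\<in>{0..<n}. A $$ (i,k) * B $$ (k,j))"
      using A B ji i by (simp add: scalar_prod_def)
    also have "\<dots> = 0"
    proof (intro sum.neutral ballI)
      fix k assume k: "k \<in> {0..<n}"
      show "A $$ (i,k) * B $$ (k,j) = 0"
      proof (cases "k < i")
        case True then show ?thesis using a[of k i] i A by (simp)
      next
        case False then show ?thesis using b[of j k] ji k by (simp)
      qed
    qed
    finally show "(A * B) $$ (i,j) = 0" .
  qed
  fix j assume j: "j < n"
  have "(A * B) $$ (j,j) = (\<Sum>k\<in>{0..<n}. A $$ (j,k) * B $$ (k,j))"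
    using A B j by (simp add: scalar_prod_def)
  also have "\<dots> = A $$ (j,j) * B $$ (j,j)"
  proof (rule sum_single)
    fix k assume k: "k \<in> {0..<n}" "k \<noteq> j"
    show "A $$ (j,k) * B $$ (k,j) = 0"
    proof (cases "k < j")
      case True then show ?thesis using a[of k j] j by (simp)
    next
      case False then show ?thesis using b[of j k] k by (simp)
    qed
  qed (use j in auto)
  finally show "(A * B) $$ (j,j) = A $$ (j,j) * B $$ (j,j)" .
qed

lemma meval_ut: assumes T: "T \<in> carrier_mat n n" and uT: "upper_triangular T"
  shows "upper_triangular (meval T p) \<and> (\<forall>j<n. meval T p $$ (j,j) = poly p (T $$ (j,j)))"
proof (induction p)
  case 0
  then show ?case using T by (auto simp: upper_triangular_def)
next
  case (pCons a p)
  have M: "meval T p \<in> carrier_mat n n" using T by (simp)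
  note u = ut_mult[OF T M uT conjunct1[OF pCons(2)]]
  have "upper_triangular (a \<cdot>\<^sub>m 1\<^sub>m n + T * meval T p)"
    using u(1) T M by (auto simp: upper_triangular_def)
  moreover have "(a \<cdot>\<^sub>m 1\<^sub>m n + T * meval T p) $$ (j,j) = poly (pCons a p) (T $$ (j,j))" if j: "j < n" for j
    using u(2)[OF j] j pCons(2) T M by (simp)
  ultimately show ?case by (simp add: meval_pCons[OF T])
qed

lemma strict_ut_pow: assumes U: "U \<in> carrier_mat n n"
  and sU: "\<And>i j. i < n \<Longrightarrow> j < n \<Longrightarrow> j \<le> i \<Longrightarrow> U $$ (i,j) = 0"
  shows "i < n \<Longrightarrow> j < n \<Longrightarrow> j < i + k \<Longrightarrow> (U ^\<^sub>m k) $$ (i,j) = 0"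
proof (induction k arbitrary: i j)
  case 0
  then show ?case using U by (simp)
next
  case (Suc k)
  have "(U ^\<^sub>m Suc k) $$ (i,j) = (\<Sum>l\<in>{0..<n}. (U ^\<^sub>m k) $$ (i,l) * U $$ (l,j))"
    using U Suc.prems by (simp add: scalar_prod_def)
  also have "\<dots> = 0"
  proof (intro sum.neutral ballI)
    fix l assume l: "l \<in> {0..<n}"
    show "(U ^\<^sub>m k) $$ (i,l) * U $$ (l,j) = 0"
    proof (cases "l < i + k")
      case True then show ?thesis using Suc.IH[of i l] Suc.prems l by (simp)
    next
      case False then show ?thesis using sU[of l j] Suc.prems l by (simp)
    qed
  qed
  finally show ?case .
qed

lemma strict_ut_nilpotent: assumes U: "U \<in> carrier_mat n n"
  and sU: "\<And>i j. i < n \<Longrightarrow> j < n \<Longrightarrow> j \<le> i \<Longrightarrow> U $$ (i,j) = 0"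
  shows "U ^\<^sub>m n = 0\<^sub>m n n"
  using strict_ut_pow[OF U sU, of _ _ n] U by (intro eq_matI, auto)

lemma adj_mult_self_zero: assumes H: "H \<in> carrier_mat n m" and z: "adj H * H = 0\<^sub>m m m"
  shows "H = 0\<^sub>m n m"
proof (rule eq_matI)
  fix i j assume i: "i < dim_row (0\<^sub>m n m)" and j: "j < dim_col (0\<^sub>m n m)"
  have "(adj H * H) $$ (j,j) = (\<Sum>k\<in>{0..<n}. cnj (H $$ (k,j)) * H $$ (k,j))"
    using H i j by (simp add: scalar_prod_def)
  also have "\<dots> = (\<Sum>k\<in>{0..<n}. complex_of_real ((cmod (H $$ (k,j)))\<^sup>2))"
    by (intro sum.cong refl) (metis complex_norm_square mult.commute)
  finally have "(\<Sum>k\<in>{0..<n}. complex_of_real ((cmod (H $$ (k,j)))\<^sup>2)) = 0"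
    using z i j by (simp)
  then have "complex_of_real (\<Sum>k\<in>{0..<n}. (cmod (H $$ (k,j)))\<^sup>2) = 0"
    by (simp only: of_real_sum)
  then have "(\<Sum>k\<in>{0..<n}. (cmod (H $$ (k,j)))\<^sup>2) = 0"
    by (simp only: of_real_eq_0_iff)
  then have "\<forall>k\<in>{0..<n}. (cmod (H $$ (k,j)))\<^sup>2 = 0"
    by (subst sum_nonneg_eq_0_iff[symmetric], auto)
  then show "H $$ (i,j) = 0\<^sub>m n m $$ (i,j)" using i j by (simp)
qed (use H in auto)

lemma herm_nilpotent: assumes H: "H \<in> carrier_mat n n" and h: "adj H = H"
  shows "H ^\<^sub>m Suc k = 0\<^sub>m n n \<Longrightarrow> H = 0\<^sub>m n n"
proof (induction k rule: less_induct)
  case (less k)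
  show ?case
  proof (cases k)
    case 0
    then show ?thesis using less.prems H by (simp)
  next
    case (Suc k')
    let ?G = "H ^\<^sub>m k"
    have G: "?G \<in> carrier_mat n n" using H by (simp)
    have aG: "adj ?G = ?G" using adj_pow[OF H, of k] h by (simp)
    have "adj ?G * ?G = H ^\<^sub>m (k + k)" using aG pow_mat_add[OF H] by (simp)
    also have "\<dots> = H ^\<^sub>m (Suc k + k')" using Suc by (simp)
    also have "\<dots> = 0\<^sub>m n n" using pow_mat_add[OF H, of "Suc k" k'] less.prems H by (simp add: mzero_mult)
    finally have "?G = 0\<^sub>m n n" using adj_mult_self_zero[OF G] by (simp)
    then show ?thesis using less.IH[of k'] Suc by (simp)
  qed
qed


definition ip :: "complex vec \<Rightarrow> complex vec \<Rightarrow> complex" where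
  "ip v w = (\<Sum>i<dim_vec v. cnj (v $ i) * w $ i)"

lemma ip_mat: assumes H: "H \<in> carrier_mat n n" and v: "v \<in> carrier_vec n" and w: "w \<in> carrier_vec n"
  shows "ip v (H *\<^sub>v w) = ip (adj H *\<^sub>v v) w"
proof -
  have "ip v (H *\<^sub>v w) = (\<Sum>i<n. \<Sum>j<n. cnj (v $ i) * H $$ (i,j) * w $ j)"
    using H v w by (auto simp: ip_def scalar_prod_def sum_distrib_left atLeast0LessThan mult.assoc intro!: sum.cong)
  also have "\<dots> = (\<Sum>j<n. \<Sum>i<n. cnj (v $ i) * H $$ (i,j) * w $ j)" by (rule sum.swap)
  also have "\<dots> = ip (adj H *\<^sub>v v) w"
    using H v w by (auto simp: ip_def scalar_prod_def sum_distrib_right sum_distrib_left atLeast0LessThan mult.commute mult.left_commute intro!: sum.cong)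
  finally show ?thesis .
qed

lemma ip_smult_right: "dim_vec w = dim_vec v \<Longrightarrow> ip v (c \<cdot>\<^sub>v w) = c * ip v w"
  by (auto simp: ip_def sum_distrib_left mult.left_commute intro!: sum.cong)

lemma ip_smult_left: "ip (c \<cdot>\<^sub>v v) w = cnj c * ip v w"
  by (auto simp: ip_def sum_distrib_left mult.assoc intro!: sum.cong)

lemma ip_self: "ip v v = complex_of_real (\<Sum>i<dim_vec v. (cmod (v $ i))\<^sup>2)"
proof -
  have "ip v v = (\<Sum>i<dim_vec v. complex_of_real ((cmod (v $ i))\<^sup>2))"
    unfolding ip_def by (intro sum.cong refl, metis complex_norm_square mult.commute)
  then show ?thesis by (simp only: of_real_sum)
qed

lemma ip_self_zero: assumes "ip v v = 0" shows "v = 0\<^sub>v (dim_vec v)"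
proof -
  have "(\<Sum>i<dim_vec v. (cmod (v $ i))\<^sup>2) = 0" using assms ip_self[of v] by (simp only: of_real_eq_0_iff)
  then have "\<forall>i\<in>{..<dim_vec v}. (cmod (v $ i))\<^sup>2 = 0"
    by (subst sum_nonneg_eq_0_iff[symmetric], auto)
  then show ?thesis by (intro eq_vecI, auto)
qed

lemma ip_self_real: "ip v v \<in> \<real>" "Re (ip v v) \<ge> 0"
  using ip_self[of v] by (auto intro: sum_nonneg)

lemma eig_herm_real: assumes H: "H \<in> carrier_mat n n" and h: "adj H = H" and ev: "eigenvector H v l"
  shows "cnj l = l"
proof -
  have v: "v \<in> carrier_vec n" and v0: "v \<noteq> 0\<^sub>v n" and Hv: "H *\<^sub>v v = l \<cdot>\<^sub>v v"
    using ev H unfolding eigenvector_def by (auto)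
  have "l * ip v v = ip v (H *\<^sub>v v)" using Hv v by (simp add: ip_smult_right)
  also have "\<dots> = ip (H *\<^sub>v v) v" using ip_mat[OF H v v] h by (simp)
  also have "\<dots> = cnj l * ip v v" using Hv by (simp add: ip_smult_left)
  finally have "(l - cnj l) * ip v v = 0" by (simp add: algebra_simps)
  moreover have "ip v v \<noteq> 0" using ip_self_zero[of v] v v0 by (auto)
  ultimately show ?thesis by (simp)
qed

lemma meval_herm: assumes A: "A \<in> carrier_mat n n" and h: "adj A = A"
  shows "(\<forall>k. cnj (coeff p k) = coeff p k) \<Longrightarrow> adj (meval A p) = meval A p"
proof (induction p)
  case 0
  then show ?case using A by (simp)
next
  case (pCons a p)
  have a: "cnj a = a" using pCons(3)[rule_format, of 0] by (simp)
  have cp: "\<forall>k. cnj (coeff p k) = coeff p k" using pCons(3)[rule_format, of "Suc k" for k] by (simp)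
  have M: "meval A p \<in> carrier_mat n n" using A by (simp)
  have "adj (a \<cdot>\<^sub>m 1\<^sub>m n + A * meval A p) = adj (a \<cdot>\<^sub>m 1\<^sub>m n) + adj (A * meval A p)"
    by (rule adj_add) (use A M in auto)
  also have "\<dots> = a \<cdot>\<^sub>m 1\<^sub>m n + meval A p * A"
    using a pCons(2)[OF cp] h by (simp add: adj_mult[OF A M] adj_smult)
  also have "\<dots> = a \<cdot>\<^sub>m 1\<^sub>m n + A * meval A p" using meval_commute[OF A] by (simp)
  finally show ?case by (simp add: meval_pCons[OF A])
qed

lemma poly_linprod_zero: "poly (\<Prod>e\<leftarrow>es. [:- e, 1:]) x = 0 \<longleftrightarrow> x \<in> set (es :: complex list)"
  by (induction es, auto)

lemma herm_poly_zero: assumes A: "A \<in> carrier_mat n n" and h: "adj A = A"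
  and real: "\<forall>k. cnj (coeff p k) = coeff p k"
  and roots: "\<And>l. eigenvalue A l \<Longrightarrow> poly p l = 0"
  shows "meval A p = 0\<^sub>m n n"
proof -
  obtain es where cp: "char_poly A = (\<Prod>e\<leftarrow>es. [:- e, 1:])" using char_poly_factorized[OF A] by (auto)
  obtain T P Q where sd: "schur_decomposition A es = (T,P,Q)" by (cases "schur_decomposition A es", auto)
  from schur_decomposition[OF A cp sd]
  have sim: "similar_mat_wit A T P Q" and uT: "upper_triangular T" and dT: "diag_mat T = es" by (auto)
  from sim A have T: "T \<in> carrier_mat n n" and P: "P \<in> carrier_mat n n" and Q: "Q \<in> carrier_mat n n"
    and PQ: "P * Q = 1\<^sub>m n" and QP: "Q * P = 1\<^sub>m n" and AT: "A = P * T * Q"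
    unfolding similar_mat_wit_def Let_def by (auto)
  have ev: "eigenvalue A (T $$ (j,j))" if j: "j < n" for j
  proof -
    have "T $$ (j,j) \<in> set es" using dT j T unfolding diag_mat_def by (auto)
    then show ?thesis using eigenvalue_root_char_poly[OF A] cp poly_linprod_zero by (simp)
  qed
  let ?U = "meval T p"
  have U: "?U \<in> carrier_mat n n" using T by (simp)
  have uU: "upper_triangular ?U" and dU: "\<And>j. j < n \<Longrightarrow> ?U $$ (j,j) = poly p (T $$ (j,j))"
    using meval_ut[OF T uT, of p] by (auto)
  have sU: "?U $$ (i,j) = 0" if "i < n" "j < n" "j \<le> i" for i j
  proof (cases "j = i")
    case True then show ?thesis using dU[of i] roots[OF ev[of i]] that by (simp)
  next
    case False then show ?thesis using uU that U by (auto simp: upper_triangular_def)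
  qed
  have Un: "?U ^\<^sub>m n = 0\<^sub>m n n" by (rule strict_ut_nilpotent[OF U sU])
  have MA: "meval A p = P * ?U * Q" using meval_similar[OF T P Q PQ QP] AT by (simp)
  have "similar_mat_wit (meval A p) ?U P Q"
    unfolding similar_mat_wit_def Let_def using MA P Q U PQ QP A by (simp)
  then have pw: "meval A p ^\<^sub>m n = P * ?U ^\<^sub>m n * Q" by (rule similar_mat_wit_pow_id)
  have Mz: "meval A p ^\<^sub>m n = 0\<^sub>m n n" using pw Un P Q by (simp add: mzero_mult mmult_zero)
  have MH: "adj (meval A p) = meval A p" by (rule meval_herm[OF A h real])
  show ?thesis
  proof (cases n)
    case 0
    then show ?thesis using A by (intro eq_matI, auto)
  next
    case (Suc k)
    then show ?thesis using herm_nilpotent[OF meval_carrier[OF A] MH, of k] Mz by (simp)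
  qed
qed


definition realp :: "complex poly \<Rightarrow> bool" where
  "realp p \<longleftrightarrow> (\<forall>k. cnj (coeff p k) = coeff p k)"

lemma realp_add: "realp p \<Longrightarrow> realp q \<Longrightarrow> realp (p + q)"
  by (simp add: realp_def)
lemma realp_diff: "realp p \<Longrightarrow> realp q \<Longrightarrow> realp (p - q)"
  by (simp add: realp_def)
lemma realp_mult: "realp p \<Longrightarrow> realp q \<Longrightarrow> realp (p * q)"
  by (simp add: realp_def coeff_mult)
lemma realp_smult: "cnj c = c \<Longrightarrow> realp p \<Longrightarrow> realp (smult c p)"
  by (simp add: realp_def)
lemma realp_pCons: "cnj c = c \<Longrightarrow> realp p \<Longrightarrow> realp (pCons c p)"
  by (simp add: realp_def coeff_pCons split: nat.split)
lemma realp_0: "realp 0" by (simp add: realp_def)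
lemma realp_1: "realp 1" by (simp add: realp_def coeff_1)
lemma realp_power: "realp p \<Longrightarrow> realp (p ^ k)"
  by (induction k, auto intro: realp_mult realp_1)
lemma realp_prod: "(\<And>x. x \<in> S \<Longrightarrow> realp (g x)) \<Longrightarrow> realp (\<Prod>x\<in>S. g x)"
  by (induction S rule: infinite_finite_induct, auto intro: realp_mult realp_1)
lemma realp_poly: assumes "realp p" "cnj x = x" shows "cnj (poly p x) = poly p x"
proof -
  have "map_poly cnj p = p" using assms(1) by (intro poly_eqI, auto simp: coeff_map_poly realp_def)
  then show ?thesis using poly_cnj[of p x] assms(2) by (simp)
qed

lemma interpolate: assumes "finite S" "\<forall>x\<in>S. cnj x = x \<and> cnj (f x) = f x"
  shows "\<exists>q. realp q \<and> (\<forall>x\<in>S. poly q x = f x)"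
  using assms
proof (induction S rule: finite_induct)
  case empty
  then show ?case using realp_0 by (blast)
next
  case (insert a S)
  then obtain q where q: "realp q" "\<forall>x\<in>S. poly q x = f x" by (auto)
  define N where "N = (\<Prod>s\<in>S. [:- s, 1:])"
  have rN: "realp N" unfolding N_def using insert.prems
    by (intro realp_prod realp_pCons realp_0, auto)
  have N0: "poly N x = 0" if "x \<in> S" for x
    unfolding N_def poly_prod using insert.hyps(1) that by (auto intro: prod_zero)
  have Na: "poly N a \<noteq> 0"
    unfolding N_def poly_prod using insert.hyps by (auto)
  define c where "c = (f a - poly q a) / poly N a"
  have ca: "cnj a = a" "cnj (f a) = f a" using insert.prems by (auto)
  have cc: "cnj c = c" unfolding c_def using realp_poly[OF q(1) ca(1)] realp_poly[OF rN ca(1)] ca(2) by (simp)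
  let ?q = "q + smult c N"
  have "realp ?q" by (intro realp_add q realp_smult cc rN)
  moreover have "\<forall>x\<in>insert a S. poly ?q x = f x"
    using q(2) N0 Na by (auto simp: c_def)
  ultimately show ?case by (blast)
qed

lemma qform_ip: assumes A: "A \<in> carrier_mat n n"
  shows "qform A f = ip (vec n f) (A *\<^sub>v vec n f)"
  using A by (auto simp: qform_def ip_def scalar_prod_def sum_distrib_left mult.assoc atLeast0LessThan intro!: sum.cong)

lemma psd_ip: assumes A: "A \<in> carrier_mat n n"
  shows "psd A \<longleftrightarrow> adj A = A \<and> (\<forall>v\<in>carrier_vec n. ip v (A *\<^sub>v v) \<in> \<real> \<and> Re (ip v (A *\<^sub>v v)) \<ge> 0)"
proof
  assume p: "psd A"
  show "adj A = A \<and> (\<forall>v\<in>carrier_vec n. ip v (A *\<^sub>v v) \<in> \<real> \<and> Re (ip v (A *\<^sub>v v)) \<ge> 0)"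
  proof (intro conjI ballI)
    show "adj A = A" using p by (simp add: psd_def hermitian_def)
    fix v :: "complex vec" assume v: "v \<in> carrier_vec n"
    have "vec n (\<lambda>i. v $ i) = v" using v by (auto)
    then have "qform A (\<lambda>i. v $ i) = ip v (A *\<^sub>v v)" using qform_ip[OF A, of "\<lambda>i. v $ i"] by (simp)
    then show "ip v (A *\<^sub>v v) \<in> \<real>" "Re (ip v (A *\<^sub>v v)) \<ge> 0" using p unfolding psd_def by metis+
  qed
next
  assume r: "adj A = A \<and> (\<forall>v\<in>carrier_vec n. ip v (A *\<^sub>v v) \<in> \<real> \<and> Re (ip v (A *\<^sub>v v)) \<ge> 0)"
  show "psd A" unfolding psd_def hermitian_def
    using r A qform_ip[OF A] by (auto)
qed

lemma psd_eig: assumes A: "A \<in> carrier_mat n n" and p: "psd A" and e: "eigenvalue A l"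
  shows "l = complex_of_real (Re l) \<and> Re l \<ge> 0"
proof -
  obtain v where ev: "eigenvector A v l" using e unfolding eigenvalue_def by (auto)
  have v: "v \<in> carrier_vec n" and v0: "v \<noteq> 0\<^sub>v n" and Av: "A *\<^sub>v v = l \<cdot>\<^sub>v v"
    using ev A unfolding eigenvector_def by (auto)
  from psd_ip[OF A] p v have r: "ip v (A *\<^sub>v v) \<in> \<real>" "Re (ip v (A *\<^sub>v v)) \<ge> 0" by (auto)
  have i: "ip v (A *\<^sub>v v) = l * ip v v" using Av v by (simp add: ip_smult_right)
  define s where "s = (\<Sum>i<dim_vec v. (cmod (v $ i))\<^sup>2)"
  have s: "ip v v = complex_of_real s" "s \<ge> 0" unfolding s_def by (rule ip_self) (intro sum_nonneg, auto)
  have "ip v v \<noteq> 0" using ip_self_zero[of v] v v0 by (auto)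
  then have s0: "s > 0" using s by (auto)
  obtain t where t: "l * complex_of_real s = complex_of_real t" "t \<ge> 0"
    using r i s by (metis Reals_cases Re_complex_of_real)
  have "l = complex_of_real (t / s)" using t s0 by (simp add: field_simps)
  then show ?thesis using t s0 by (simp)
qed


lemma ip_add_left: "dim_vec x = dim_vec y \<Longrightarrow> ip (x + y) w = ip x w + ip y w"
  by (auto simp: ip_def algebra_simps sum.distrib)
lemma ip_add_right: "dim_vec w = dim_vec x \<Longrightarrow> dim_vec w = dim_vec y \<Longrightarrow> ip x (w + y) = ip x w + ip x y"
  by (auto simp: ip_def algebra_simps sum.distrib)
lemma ip_conj: "dim_vec v = dim_vec w \<Longrightarrow> ip w v = cnj (ip v w)"
  by (auto simp: ip_def mult.commute)

lemma sqrt_exists: assumes A: "A \<in> carrier_mat n n" and p: "psd A"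
  shows "\<exists>B. B \<in> carrier_mat n n \<and> psd B \<and> B * B = A"
proof -
  let ?S = "{l. eigenvalue A l}"
  have cp0: "char_poly A \<noteq> 0" using degree_monic_char_poly[OF A] by (auto)
  have "?S = {l. poly (char_poly A) l = 0}" using eigenvalue_root_char_poly[OF A] by (auto)
  then have fin: "finite ?S" using poly_roots_finite[OF cp0] by (simp)
  define f where "f l = complex_of_real (root 4 (Re l))" for l
  have Sr: "\<forall>x\<in>?S. cnj x = x \<and> cnj (f x) = f x"
    using psd_eig[OF A p] by (auto simp: f_def, metis complex_cnj_complex_of_real)
  obtain q where q: "realp q" "\<forall>x\<in>?S. poly q x = f x" using interpolate[OF fin Sr] by (blast)
  define H where "H = meval A q"
  have H: "H \<in> carrier_mat n n" unfolding H_def using A by (simp)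
  have hH: "adj H = H" unfolding H_def using meval_herm[OF A _] p q(1) by (simp add: psd_def hermitian_def realp_def)
  define B where "B = H * H"
  have B: "B \<in> carrier_mat n n" unfolding B_def using H by (simp)
  have hB: "adj B = B" unfolding B_def using adj_mult[OF H H] hH by (simp)
  have "psd B" unfolding psd_ip[OF B]
  proof (intro conjI ballI hB)
    fix v :: "complex vec" assume v: "v \<in> carrier_vec n"
    have "ip v (B *\<^sub>v v) = ip v (H *\<^sub>v (H *\<^sub>v v))" unfolding B_def using H v by (simp)
    also have "\<dots> = ip (H *\<^sub>v v) (H *\<^sub>v v)" using ip_mat[OF H v, of "H *\<^sub>v v"] hH H v by (simp)
    finally show "ip v (B *\<^sub>v v) \<in> \<real>" "Re (ip v (B *\<^sub>v v)) \<ge> 0" using ip_self_real by (auto)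
  qed
  moreover have "B * B = A"
  proof -
    let ?P = "(q * q) * (q * q)"
    let ?p = "?P - [:0,1:]"
    have rp: "realp ?p" using q(1) by (intro realp_diff realp_mult realp_pCons realp_0, auto)
    have "poly ?p l = 0" if l: "eigenvalue A l" for l
    proof -
      have e: "l = complex_of_real (Re l)" "Re l \<ge> 0" using psd_eig[OF A p l] by (auto)
      have "poly ?p l = (f l) ^ 4 - l" using q(2) l by (simp add: power4_eq_xxxx)
      also have "f l ^ 4 = complex_of_real (root 4 (Re l) ^ 4)" by (simp add: f_def)
      also have "root 4 (Re l) ^ 4 = Re l" using e(2) by (simp add: real_root_pow_pos2)
      finally show ?thesis using e(1) by (simp)
    qed
    then have z: "meval A ?p = 0\<^sub>m n n"
      using herm_poly_zero[OF A _ rp[unfolded realp_def]] p by (simp add: psd_def hermitian_def)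
    have "meval A ?P = meval A ?p + meval A [:0,1:]" using meval_add[OF A, of ?p "[:0,1:]"] by (simp)
    also have "\<dots> = A" using z meval_x[OF A] A by (simp add: mzero_add)
    finally show ?thesis unfolding B_def H_def by (simp add: meval_mult[OF A])
  qed
  ultimately show ?thesis using B by (blast)
qed

lemma sqrt_step: assumes X: "X \<in> carrier_mat n n" and Y: "Y \<in> carrier_mat n n"
  and pX: "psd X" and pY: "psd Y" and v: "v \<in> carrier_vec n"
  and Yv: "Y *\<^sub>v v = X *\<^sub>v v + m \<cdot>\<^sub>v v" and m: "cnj m = m" and sq: "Y * Y = X * X"
  shows "m * (2 * ip v (X *\<^sub>v v) + m * ip v v) = 0"
proof -
  have hX: "adj X = X" and hY: "adj Y = Y" using pX pY by (auto simp: psd_def hermitian_def)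
  have b: "cnj (ip v (X *\<^sub>v v)) = ip v (X *\<^sub>v v)" using psd_ip[OF X] pX v by (auto simp: Reals_cnj_iff)
  have Xv: "X *\<^sub>v v \<in> carrier_vec n" using X v by (simp)
  have "ip (Y *\<^sub>v v) (Y *\<^sub>v v) = ip v (Y *\<^sub>v (Y *\<^sub>v v))" using ip_mat[OF Y v, of "Y *\<^sub>v v"] hY Y v by (simp)
  also have "\<dots> = ip v ((Y * Y) *\<^sub>v v)" using Y v by (simp)
  also have "\<dots> = ip v (X *\<^sub>v (X *\<^sub>v v))" using sq X v by (simp)
  also have "\<dots> = ip (X *\<^sub>v v) (X *\<^sub>v v)" using ip_mat[OF X v, of "X *\<^sub>v v"] hX X v by (simp)
  finally have e: "ip (X *\<^sub>v v + m \<cdot>\<^sub>v v) (X *\<^sub>v v + m \<cdot>\<^sub>v v) = ip (X *\<^sub>v v) (X *\<^sub>v v)" using Yv by (simp)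
  have "ip (X *\<^sub>v v + m \<cdot>\<^sub>v v) (X *\<^sub>v v + m \<cdot>\<^sub>v v) =
     ip (X *\<^sub>v v) (X *\<^sub>v v) + m * ip (X *\<^sub>v v) v + cnj m * ip v (X *\<^sub>v v) + cnj m * m * ip v v"
    using X v by (simp add: ip_add_left ip_add_right ip_smult_left ip_smult_right algebra_simps)
  also have "ip (X *\<^sub>v v) v = ip v (X *\<^sub>v v)" using ip_conj[of v "X *\<^sub>v v"] b X v by (simp)
  finally show ?thesis using e m by (simp add: algebra_simps)
qed

lemma sqrt_unique: assumes B: "B \<in> carrier_mat n n" and C: "C \<in> carrier_mat n n"
  and pB: "psd B" and pC: "psd C" and sq: "B * B = C * C"
  shows "B = C"
proof -
  let ?D = "C - B"
  have D: "?D \<in> carrier_mat n n" using B C by (auto simp: minus_carrier_mat)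
  have hD: "adj ?D = ?D" using adj_minus[OF C B] pB pC by (simp add: psd_def hermitian_def)
  have "poly [:0,1:] l = 0" if e: "eigenvalue ?D l" for l
  proof -
    obtain v where ev: "eigenvector ?D v l" using e unfolding eigenvalue_def by (auto)
    have v: "v \<in> carrier_vec n" and v0: "v \<noteq> 0\<^sub>v n" and Dv: "?D *\<^sub>v v = l \<cdot>\<^sub>v v"
      using ev D unfolding eigenvector_def by (auto)
    have lr: "cnj l = l" by (rule eig_herm_real[OF D hD ev])
    have "?D *\<^sub>v v = C *\<^sub>v v - B *\<^sub>v v" using B C v by (simp add: minus_mult_distrib_mat_vec)
    then have lv: "l \<cdot>\<^sub>v v = C *\<^sub>v v - B *\<^sub>v v" using Dv by (simp)
    have ent: "l * v $ i = (C *\<^sub>v v) $ i - (B *\<^sub>v v) $ i" if "i < n" for i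
    proof -
      have "(l \<cdot>\<^sub>v v) $ i = (C *\<^sub>v v - B *\<^sub>v v) $ i" using lv by (simp)
      then show ?thesis using that v B by (simp del: index_mult_mat_vec)
    qed
    have ent2: "(C *\<^sub>v v) $ i = (B *\<^sub>v v) $ i + l * v $ i" if "i < n" for i
      using ent[OF that] by (simp add: algebra_simps del: index_mult_mat_vec)
    have Cv: "C *\<^sub>v v = B *\<^sub>v v + l \<cdot>\<^sub>v v"
      by (rule eq_vecI) (use ent2 B C v in \<open>simp_all del: index_mult_mat_vec\<close>)
    have Bv: "B *\<^sub>v v = C *\<^sub>v v + (- l) \<cdot>\<^sub>v v"
      by (rule eq_vecI) (use ent2 B C v in \<open>simp_all del: index_mult_mat_vec\<close>)
    have 1: "l * (2 * ip v (B *\<^sub>v v) + l * ip v v) = 0" by (rule sqrt_step[OF B C pB pC v Cv lr sq[symmetric]])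
    have 2: "(- l) * (2 * ip v (C *\<^sub>v v) + (- l) * ip v v) = 0" by (rule sqrt_step[OF C B pC pB v Bv _ sq], use lr in simp)
    show ?thesis
    proof (rule ccontr)
      assume "poly [:0,1:] l \<noteq> 0"
      then have l0: "l \<noteq> 0" by (simp)
      obtain bb where bb: "ip v (B *\<^sub>v v) = complex_of_real bb" "bb \<ge> 0"
        using psd_ip[OF B] pB v by (metis Reals_cases Re_complex_of_real)
      obtain cc where cc: "ip v (C *\<^sub>v v) = complex_of_real cc" "cc \<ge> 0"
        using psd_ip[OF C] pC v by (metis Reals_cases Re_complex_of_real)
      define rr where "rr = (\<Sum>i<dim_vec v. (cmod (v $ i))\<^sup>2)"
      have rr: "ip v v = complex_of_real rr" unfolding rr_def by (rule ip_self)
      have "ip v v \<noteq> 0" using ip_self_zero[of v] v v0 by (auto)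
      then have rr0: "rr \<noteq> 0" using rr by (auto)
      obtain x where ll: "l = complex_of_real x" using lr by (metis Reals_cases Reals_cnj_iff)
      have "2 * ip v (B *\<^sub>v v) + l * ip v v = 0" using 1 l0 by (simp)
      then have "complex_of_real (2 * bb + x * rr) = 0" using bb rr ll by (simp)
      then have e1: "2 * bb + x * rr = 0" by (simp only: of_real_eq_0_iff)
      have "2 * ip v (C *\<^sub>v v) - l * ip v v = 0" using 2 l0 by (simp)
      then have "complex_of_real (2 * cc - x * rr) = 0" using cc rr ll by (simp)
      then have e2: "2 * cc - x * rr = 0" by (simp only: of_real_eq_0_iff)
      have "x * rr = 0" using e1 e2 bb cc by (linarith)
      then have "x = 0" using rr0 by (simp)
      then show False using l0 ll by (simp)
    qed
  qed
  then have "meval ?D [:0,1:] = 0\<^sub>m n n"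
    by (intro herm_poly_zero[OF D hD], auto simp: coeff_pCons split: nat.split)
  then have "?D = 0\<^sub>m n n" using meval_x[OF D] by (simp)
  note Dz = this
  show ?thesis
  proof (rule eq_matI)
    fix i j assume ij: "i < dim_row C" "j < dim_col C"
    have "(C - B) $$ (i,j) = 0\<^sub>m n n $$ (i,j)" using Dz by simp
    then show "B $$ (i,j) = C $$ (i,j)" using ij B C by simp
  qed (use B C in auto)
qed

lemma mat_sqrt: assumes A: "A \<in> carrier_mat n n" and p: "psd A"
  shows "mat_sqrt A \<in> carrier_mat n n \<and> psd (mat_sqrt A) \<and> mat_sqrt A * mat_sqrt A = A"
proof -
  have "\<exists>!B. B \<in> carrier_mat n n \<and> psd B \<and> B * B = A"
    using sqrt_exists[OF A p] sqrt_unique by (metis)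
  note th = theI'[OF this]
  have "mat_sqrt A = (THE B. B \<in> carrier_mat n n \<and> psd B \<and> B * B = A)" unfolding mat_sqrt_def using A by (simp)
  then show ?thesis using th by (simp)
qed


lemma pow_entry_bound: fixes A :: "complex mat" assumes A: "A \<in> carrier_mat n n"
  and c: "\<And>i j. i < n \<Longrightarrow> j < n \<Longrightarrow> cmod (A $$ (i,j)) \<le> c"
  shows "i < n \<Longrightarrow> j < n \<Longrightarrow> cmod ((A ^\<^sub>m k) $$ (i,j)) \<le> (real n * c) ^ k"
proof (induction k arbitrary: i j)
  case 0
  then show ?case using A by (simp)
next
  case (Suc k)
  have c0: "0 \<le> c" using c[of i j] Suc.prems norm_ge_zero order_trans by (blast)
  have "(A ^\<^sub>m Suc k) $$ (i,j) = (\<Sum>l\<in>{0..<n}. (A ^\<^sub>m k) $$ (i,l) * A $$ (l,j))"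
    using A Suc.prems by (simp add: scalar_prod_def)
  also have "cmod \<dots> \<le> (\<Sum>l\<in>{0..<n}. cmod ((A ^\<^sub>m k) $$ (i,l) * A $$ (l,j)))" by (rule norm_sum)
  also have "\<dots> \<le> (\<Sum>l\<in>{0..<n}. (real n * c) ^ k * c)"
  proof (rule sum_mono)
    fix l assume l: "l \<in> {0..<n}"
    show "cmod ((A ^\<^sub>m k) $$ (i,l) * A $$ (l,j)) \<le> (real n * c) ^ k * c"
      unfolding norm_mult using Suc.IH[of i l] c[of l j] l Suc.prems c0
      by (intro mult_mono, auto)
  qed
  also have "\<dots> = (real n * c) ^ Suc k" by (simp add: algebra_simps)
  finally show ?case .
qed

lemma exp_entry_summable: fixes A :: "complex mat" assumes A: "A \<in> carrier_mat n n" and i: "i < n" and j: "j < n"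
  shows "summable (\<lambda>k. (A ^\<^sub>m k) $$ (i,j) / of_nat (fact k))"
proof -
  define c where "c = (\<Sum>i<n. \<Sum>j<n. cmod (A $$ (i,j)))"
  have c: "cmod (A $$ (i',j')) \<le> c" if "i' < n" "j' < n" for i' j'
  proof -
    have "cmod (A $$ (i',j')) \<le> (\<Sum>j<n. cmod (A $$ (i',j)))"
      using that by (intro member_le_sum, auto)
    also have "\<dots> \<le> c" unfolding c_def using that by (intro member_le_sum[of i' "{..<n}"], auto intro: sum_nonneg)
    finally show ?thesis .
  qed
  show ?thesis
  proof (rule summable_comparison_test')
    show "summable (\<lambda>k. inverse (fact k) * (real n * c) ^ k)" by (rule summable_exp)
    fix k :: nat
    have "cmod ((A ^\<^sub>m k) $$ (i,j) / of_nat (fact k)) = cmod ((A ^\<^sub>m k) $$ (i,j)) / fact k"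
      by (simp add: norm_divide)
    also have "\<dots> \<le> (real n * c) ^ k / fact k"
      using pow_entry_bound[OF A c i j, of k] by (intro divide_right_mono, auto)
    finally show "cmod ((A ^\<^sub>m k) $$ (i,j) / of_nat (fact k)) \<le> inverse (fact k) * (real n * c) ^ k"
      by (simp add: field_simps)
  qed
qed

lemma cnj_suminf: "summable f \<Longrightarrow> cnj (suminf f) = (\<Sum>k. cnj (f k))"
  by (metis sums_cnj summable_sums sums_unique)

lemma adj_mat_exp: assumes A: "A \<in> carrier_mat n n"
  shows "adj (mat_exp A) = mat_exp (adj A)"
proof (rule eq_matI)
  fix i j assume ij: "i < dim_row (mat_exp (adj A))" "j < dim_col (mat_exp (adj A))"
  then have i: "i < n" and j: "j < n" using A by (auto simp: mat_exp_def)
  have "adj (mat_exp A) $$ (i,j) = cnj (\<Sum>k. (A ^\<^sub>m k) $$ (j,i) / of_nat (fact k))"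
    using A i j by (simp add: mat_exp_def)
  also have "\<dots> = (\<Sum>k. cnj ((A ^\<^sub>m k) $$ (j,i) / of_nat (fact k)))"
    by (rule cnj_suminf[OF exp_entry_summable[OF A j i]])
  also have "\<dots> = (\<Sum>k. (adj A ^\<^sub>m k) $$ (i,j) / of_nat (fact k))"
    using A i j by (simp add: adj_pow[OF A, symmetric])
  also have "\<dots> = mat_exp (adj A) $$ (i,j)" using A i j by (simp add: mat_exp_def)
  finally show "adj (mat_exp A) $$ (i,j) = mat_exp (adj A) $$ (i,j)" .
qed (use A in \<open>auto simp: mat_exp_def\<close>)

definition gen :: "nat list \<Rightarrow> nat \<Rightarrow> (nat \<Rightarrow> complex mat) \<Rightarrow> (nat \<Rightarrow> real) \<Rightarrow> complex mat" where
  "gen is m X \<xi> = foldr (\<lambda>i M. ((\<i> * complex_of_real (\<xi> i)) \<cdot>\<^sub>m X i) + M) is (0\<^sub>m m m)"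

lemma gen_carrier: "gen is m X \<xi> \<in> carrier_mat m m"
  by (induction "is", auto simp: gen_def)

lemma gen_adj: assumes "\<And>i. i \<in> set is \<Longrightarrow> X i \<in> carrier_mat m m \<and> adj (X i) = X i"
  shows "adj (gen is m X \<xi>) = gen is m X (\<lambda>k. - \<xi> k)"
  using assms
proof (induction "is")
  case Nil
  then show ?case by (simp add: gen_def)
next
  case (Cons i "is")
  have Xi: "X i \<in> carrier_mat m m" "adj (X i) = X i" using Cons.prems by (auto)
  have "adj (gen (i # is) m X \<xi>) = adj ((\<i> * complex_of_real (\<xi> i)) \<cdot>\<^sub>m X i) + adj (gen is m X \<xi>)"
    unfolding gen_def by (simp, rule adj_add, use Xi gen_carrier[unfolded gen_def] in auto)
  also have "\<dots> = gen (i # is) m X (\<lambda>k. - \<xi> k)"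
    using Cons Xi by (simp add: adj_smult gen_def)
  finally show ?case .
qed

lemma weyl_gen: "weyl d m X \<xi> = mat_exp (gen [0..<d] m X \<xi>)"
  by (simp add: weyl_def gen_def)

lemma weyl_carrier: "weyl d m X \<xi> \<in> carrier_mat m m"
  using gen_carrier[of "[0..<d]" m X \<xi>] by (auto simp: weyl_gen mat_exp_def)

lemma weyl_adj: assumes "\<And>i. i < d \<Longrightarrow> X i \<in> carrier_mat m m \<and> hermitian (X i)"
  shows "adj (weyl d m X \<xi>) = weyl d m X (\<lambda>k. - \<xi> k)"
  unfolding weyl_gen
  using adj_mat_exp[OF gen_carrier] gen_adj[of "[0..<d]" X m \<xi>] assms by (simp add: hermitian_def)


lemma mminus_mult: "dim_row A = dim_row B \<Longrightarrow> dim_col A = dim_col B \<Longrightarrow> dim_col A = dim_row C \<Longrightarrow>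
   (A - B) * C = A * C - B * (C::complex mat)"
  by (intro eq_matI, auto simp: scalar_prod_def algebra_simps sum_subtractf)
lemma mmult_minus: "dim_row B = dim_row C \<Longrightarrow> dim_col B = dim_col C \<Longrightarrow> dim_col A = dim_row B \<Longrightarrow>
   A * (B - C) = A * B - A * (C::complex mat)"
  by (intro eq_matI, auto simp: scalar_prod_def algebra_simps sum_subtractf)

lemma tr_minus: "dim_row X = dim_row Y \<Longrightarrow> dim_col X = dim_col Y \<Longrightarrow> dim_col R = dim_row X \<Longrightarrow> dim_col X = dim_row R \<Longrightarrow>
  mtrace (R * (X - Y)) = mtrace (R * X) - mtrace (R * (Y::complex mat))"
  unfolding mtrace_def by (simp add: scalar_prod_def algebra_simps sum_subtractf flip: sum_subtractf)
lemma tr_smult: "dim_col R = dim_row X \<Longrightarrow> dim_col X = dim_row R \<Longrightarrow> mtrace (R * (c \<cdot>\<^sub>m X)) = c * mtrace (R * (X::complex mat))"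
  unfolding mtrace_def by (simp add: scalar_prod_def algebra_simps sum_distrib_left)

lemma hs_norm_tr: "hs_norm N = sqrt (Re (mtrace (adj N * N)))"
proof -
  have "mtrace (adj N * N) = (\<Sum>j<dim_col N. \<Sum>i<dim_row N. cnj (N $$ (i,j)) * N $$ (i,j))"
    by (auto simp: mtrace_def scalar_prod_def atLeast0LessThan intro!: sum.cong)
  also have "\<dots> = (\<Sum>j<dim_col N. \<Sum>i<dim_row N. complex_of_real ((cmod (N $$ (i,j)))\<^sup>2))"
    by (intro sum.cong refl, metis complex_norm_square mult.commute)
  also have "\<dots> = complex_of_real (\<Sum>j<dim_col N. \<Sum>i<dim_row N. (cmod (N $$ (i,j)))\<^sup>2)"
    by (simp only: of_real_sum)
  finally have "Re (mtrace (adj N * N)) = (\<Sum>i<dim_row N. \<Sum>j<dim_col N. (cmod (N $$ (i,j)))\<^sup>2)"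
    by (simp add: sum.swap[of _ "{..<dim_col N}"])
  then show ?thesis by (simp add: hs_norm_def)
qed

lemma key_alg: assumes rho: "\<rho> \<in> carrier_mat m m" and R: "R \<in> carrier_mat m m"
  and A1: "A1 \<in> carrier_mat m m" and A2: "A2 \<in> carrier_mat m m" and V: "V \<in> carrier_mat m m"
  and hR: "adj R = R" and RR: "R * R = \<rho>"
  shows "mtrace (adj (A1 * A2 * R - c \<cdot>\<^sub>m (V * R)) * (A1 * A2 * R - c \<cdot>\<^sub>m (V * R))) =
    mtrace (\<rho> * (adj A2 * (adj A1 * (A1 * (A2 * 1\<^sub>m m)))))
    - c * mtrace (\<rho> * (adj A2 * (adj A1 * (V * 1\<^sub>m m))))
    - (cnj c * mtrace (\<rho> * (adj V * (A1 * (A2 * 1\<^sub>m m))))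
    - cnj c * c * mtrace (\<rho> * (adj V * (V * 1\<^sub>m m))))"
proof -
  note D = carrier_matD[OF rho] carrier_matD[OF R] carrier_matD[OF A1] carrier_matD[OF A2] carrier_matD[OF V]
  define M where "M = A1 * A2 - c \<cdot>\<^sub>m V"
  have M: "M \<in> carrier_mat m m" unfolding M_def using A1 A2 V by (auto simp: minus_carrier_mat)
  have N: "A1 * A2 * R - c \<cdot>\<^sub>m (V * R) = M * R"
    unfolding M_def using D by (simp add: mminus_mult mdist)
  have aM: "adj M = adj A2 * adj A1 - cnj c \<cdot>\<^sub>m adj V"
    unfolding M_def using A1 A2 V by (simp add: adj_minus[of _ m m] adj_mult[of _ m m] adj_smult minus_carrier_mat)
  have aN: "adj (M * R) = R * adj M" using adj_mult[OF M R] hR by (simp)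
  have DM: "dim_row M = m" "dim_col M = m" "dim_row (adj M) = m" "dim_col (adj M) = m" using M by (auto)
  have "mtrace (adj (M * R) * (M * R)) = mtrace (R * (adj M * (M * R)))"
    using aN D DM by (simp add: mdist)
  also have "\<dots> = mtrace ((adj M * (M * R)) * R)"
    by (rule mtrace_comm[of _ m m], use R M in auto)
  also have "\<dots> = mtrace ((adj M * M) * \<rho>)"
    using D DM RR by (simp add: mdist)
  also have "\<dots> = mtrace (\<rho> * (adj M * M))"
    by (rule mtrace_comm[of _ m m], use rho M in auto)
  also have "adj M * M = (adj A2 * adj A1) * (A1 * A2) - c \<cdot>\<^sub>m ((adj A2 * adj A1) * V)
      - (cnj c \<cdot>\<^sub>m (adj V * (A1 * A2)) - (cnj c * c) \<cdot>\<^sub>m (adj V * V))"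
  proof -
    have "adj M * M = adj A2 * (adj A1 * (A1 * A2)) - cnj c \<cdot>\<^sub>m (adj V * (A1 * A2)) -
        c \<cdot>\<^sub>m (adj A2 * (adj A1 * V) - cnj c \<cdot>\<^sub>m (adj V * V))"
      unfolding aM using D by (simp add: M_def mminus_mult mmult_minus mdist)
    also have "\<dots> = (adj A2 * adj A1) * (A1 * A2) - c \<cdot>\<^sub>m ((adj A2 * adj A1) * V)
      - (cnj c \<cdot>\<^sub>m (adj V * (A1 * A2)) - (cnj c * c) \<cdot>\<^sub>m (adj V * V))"
      using D by (simp add: mdist) (intro eq_matI, simp_all add: algebra_simps)
    finally show ?thesis .
  qed
  also have "mtrace (\<rho> * \<dots>) = mtrace (\<rho> * ((adj A2 * adj A1) * (A1 * A2))) - c * mtrace (\<rho> * ((adj A2 * adj A1) * V))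
      - (cnj c * mtrace (\<rho> * (adj V * (A1 * A2))) - (cnj c * c) * mtrace (\<rho> * (adj V * V)))"
    using D by (simp add: tr_minus tr_smult)
  finally show ?thesis using N D by (simp add: mdist)
qed


lemma bil_lin2: assumes "finite T" "finite U"
  shows "(\<Sum>t\<in>T. \<Sum>u\<in>U. complex_of_real (c t u) * bil d J (g t) (h u)) =
    (\<Sum>i<d. \<Sum>j<d. complex_of_real (\<Sum>t\<in>T. \<Sum>u\<in>U. c t u * g t i * h u j) * J $$ (j,i))"
proof -
  have "(\<Sum>t\<in>T. \<Sum>u\<in>U. complex_of_real (c t u) * bil d J (g t) (h u)) =
    (\<Sum>t\<in>T. \<Sum>u\<in>U. \<Sum>i<d. \<Sum>j<d. complex_of_real (c t u * g t i * h u j) * J $$ (j,i))"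
    by (simp add: bil_def sum_distrib_left mult.assoc)
  also have "\<dots> = (\<Sum>t\<in>T. \<Sum>i<d. \<Sum>u\<in>U. \<Sum>j<d. complex_of_real (c t u * g t i * h u j) * J $$ (j,i))"
    by (intro sum.cong refl, rule sum.swap)
  also have "\<dots> = (\<Sum>t\<in>T. \<Sum>i<d. \<Sum>j<d. \<Sum>u\<in>U. complex_of_real (c t u * g t i * h u j) * J $$ (j,i))"
    by (intro sum.cong refl, rule sum.swap)
  also have "\<dots> = (\<Sum>i<d. \<Sum>t\<in>T. \<Sum>j<d. \<Sum>u\<in>U. complex_of_real (c t u * g t i * h u j) * J $$ (j,i))"
    by (rule sum.swap)
  also have "\<dots> = (\<Sum>i<d. \<Sum>j<d. \<Sum>t\<in>T. \<Sum>u\<in>U. complex_of_real (c t u * g t i * h u j) * J $$ (j,i))"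
    by (intro sum.cong refl, rule sum.swap)
  also have "\<dots> = (\<Sum>i<d. \<Sum>j<d. complex_of_real (\<Sum>t\<in>T. \<Sum>u\<in>U. c t u * g t i * h u j) * J $$ (j,i))"
    by (simp add: sum_distrib_right)
  finally show ?thesis .
qed

definition gF :: "(nat \<Rightarrow> real) list \<Rightarrow> nat \<Rightarrow> nat \<Rightarrow> real" where
  "gF xs i j = - (1/2) * (\<Sum>t<length xs. \<Sum>u<length xs. (if t = u then 1 else 0) * (xs ! t) i * (xs ! u) j)
     - (\<Sum>t<length xs. \<Sum>u<length xs. (if t < u then 1 else 0) * (xs ! t) i * (xs ! u) j)"

lemma gauss_gF: "gauss_val d J xs = exp (\<Sum>i<d. \<Sum>j<d. complex_of_real (gF xs i j) * J $$ (j,i))"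
proof -
  let ?L = "length xs"
  let ?A = "\<lambda>i j. \<Sum>t<?L. \<Sum>u<?L. (if t = u then 1 else 0) * (xs ! t) i * (xs ! u) j"
  let ?B = "\<lambda>i j. \<Sum>t<?L. \<Sum>u<?L. (if t < u then 1 else 0) * (xs ! t) i * (xs ! u) j"
  have 1: "(\<Sum>t<?L. bil d J (xs ! t) (xs ! t)) =
      (\<Sum>t<?L. \<Sum>u<?L. complex_of_real (if t = u then 1 else 0) * bil d J (xs ! t) (xs ! u))"
  proof (intro sum.cong refl)
    fix t assume t: "t \<in> {..<?L}"
    show "bil d J (xs ! t) (xs ! t) = (\<Sum>u<?L. complex_of_real (if t = u then 1 else 0) * bil d J (xs ! t) (xs ! u))"
      by (subst sum_single[of _ t], use t in auto)
  qed
  have 2: "(\<Sum>t<?L. \<Sum>u<?L. if t < u then bil d J (xs ! t) (xs ! u) else 0) =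
      (\<Sum>t<?L. \<Sum>u<?L. complex_of_real (if t < u then 1 else 0) * bil d J (xs ! t) (xs ! u))"
    by (intro sum.cong refl, simp)
  have 3: "(\<Sum>i<d. \<Sum>j<d. complex_of_real (gF xs i j) * J $$ (j,i)) =
     (\<Sum>i<d. \<Sum>j<d. (- (1/2)) * (complex_of_real (?A i j) * J $$ (j,i)) - complex_of_real (?B i j) * J $$ (j,i))"
    unfolding gF_def by (intro sum.cong refl, simp add: algebra_simps)
  also have "\<dots> = - (1/2) * (\<Sum>i<d. \<Sum>j<d. complex_of_real (?A i j) * J $$ (j,i)) - (\<Sum>i<d. \<Sum>j<d. complex_of_real (?B i j) * J $$ (j,i))"
    by (simp only: sum_subtractf sum_distrib_left)
  finally show ?thesis
    unfolding gauss_val_def 1 2 bil_lin2[OF finite_lessThan finite_lessThan] by (simp)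
qed

lemma antisym_sum: assumes J: "\<And>i j. i < d \<Longrightarrow> j < d \<Longrightarrow> J $$ (j,i) = cnj (J $$ (i,j))"
  shows "(\<Sum>i<d. \<Sum>j<d. complex_of_real (x i * y j - y i * x j) * J $$ (j,i)) =
     -2 * \<i> * (\<Sum>i<d. \<Sum>j<d. complex_of_real (x i * Im (J $$ (i,j)) * y j))"
proof -
  have "(\<Sum>i<d. \<Sum>j<d. complex_of_real (y i * x j) * J $$ (j,i)) = (\<Sum>j<d. \<Sum>i<d. complex_of_real (y i * x j) * J $$ (j,i))"
    by (rule sum.swap)
  also have "\<dots> = (\<Sum>i<d. \<Sum>j<d. complex_of_real (x i * y j) * J $$ (i,j))"
    by (simp add: mult.commute)
  finally have sw: "(\<Sum>i<d. \<Sum>j<d. complex_of_real (y i * x j) * J $$ (j,i)) = (\<Sum>i<d. \<Sum>j<d. complex_of_real (x i * y j) * J $$ (i,j))" .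
  have "(\<Sum>i<d. \<Sum>j<d. complex_of_real (x i * y j - y i * x j) * J $$ (j,i)) =
     (\<Sum>i<d. \<Sum>j<d. complex_of_real (x i * y j) * J $$ (j,i)) - (\<Sum>i<d. \<Sum>j<d. complex_of_real (y i * x j) * J $$ (j,i))"
    by (simp add: left_diff_distrib sum_subtractf)
  also have "\<dots> = (\<Sum>i<d. \<Sum>j<d. complex_of_real (x i * y j) * (J $$ (j,i) - J $$ (i,j)))"
    unfolding sw by (simp add: right_diff_distrib sum_subtractf)
  also have "\<dots> = (\<Sum>i<d. \<Sum>j<d. -2 * \<i> * complex_of_real (x i * Im (J $$ (i,j)) * y j))"
  proof (intro sum.cong refl)
    fix i j assume "i \<in> {..<d}" "j \<in> {..<d}"
    then have Jij: "J $$ (j,i) = cnj (J $$ (i,j))" using J[of i j] by blast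
    have Dd: "J $$ (j,i) - J $$ (i,j) = -2 * \<i> * complex_of_real (Im (J $$ (i,j)))"
      unfolding Jij by (simp add: complex_eq_iff)
    have "complex_of_real (x i * y j) * (J $$ (j,i) - J $$ (i,j)) = complex_of_real (x i * y j) * (-2 * \<i> * complex_of_real (Im (J $$ (i,j))))"
      by (simp only: Dd)
    also have "\<dots> = -2 * \<i> * complex_of_real (x i * Im (J $$ (i,j)) * y j)"
      by (simp add: algebra_simps)
    finally show "complex_of_real (x i * y j) * (J $$ (j,i) - J $$ (i,j)) = -2 * \<i> * complex_of_real (x i * Im (J $$ (i,j)) * y j)" .
  qed
  also have "\<dots> = -2 * \<i> * (\<Sum>i<d. \<Sum>j<d. complex_of_real (x i * Im (J $$ (i,j)) * y j))"
    by (simp add: sum_distrib_left)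
  finally show ?thesis .
qed

lemma gF4: "gF [\<lambda>k. - \<eta> k, \<lambda>k. - \<xi> k, \<xi>, \<eta>] i j = 0"
  by (simp add: gF_def eval_nat_numeral lessThan_Suc algebra_simps)
lemma gF2: "gF [\<lambda>k. - (\<xi> k + \<eta> k), \<lambda>k. \<xi> k + \<eta> k] i j = 0"
  by (simp add: gF_def eval_nat_numeral lessThan_Suc algebra_simps)
lemma gF3a: "gF [\<lambda>k. - \<eta> k, \<lambda>k. - \<xi> k, \<lambda>k. \<xi> k + \<eta> k] i j = (1/2) * (\<xi> i * \<eta> j - \<eta> i * \<xi> j)"
  by (simp add: gF_def eval_nat_numeral lessThan_Suc algebra_simps)
lemma gF3b: "gF [\<lambda>k. - (\<xi> k + \<eta> k), \<xi>, \<eta>] i j = - (1/2) * (\<xi> i * \<eta> j - \<eta> i * \<xi> j)"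
  by (simp add: gF_def eval_nat_numeral lessThan_Suc algebra_simps)


theorem lemma7:
  fixes d :: nat and m :: "nat \<Rightarrow> nat"
    and X :: "nat \<Rightarrow> nat \<Rightarrow> complex mat" and \<rho> :: "nat \<Rightarrow> complex mat"
    and J :: "complex mat" and \<xi> \<eta> :: "nat \<Rightarrow> real"
  assumes rho: "\<And>n. \<rho> n \<in> carrier_mat (m n) (m n) \<and> is_state (\<rho> n)"
    and obs: "\<And>n i. i < d \<Longrightarrow> X n i \<in> carrier_mat (m n) (m n) \<and> hermitian (X n i)"
    and J: "J \<in> carrier_mat d d" "psd J"
    and conv: "qconv d m X \<rho> J"
  shows "(\<lambda>n. hs_norm (weyl d (m n) (X n) \<xi> * weyl d (m n) (X n) \<eta> * mat_sqrt (\<rho> n)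
            - exp (\<i> * (\<Sum>i<d. \<Sum>j<d. complex_of_real (\<xi> i * Im (J $$ (i,j)) * \<eta> j)))
              \<cdot>\<^sub>m (weyl d (m n) (X n) (\<lambda>k. \<xi> k + \<eta> k) * mat_sqrt (\<rho> n))))
         \<longlonglongrightarrow> 0"
proof -
  define t where "t = (\<Sum>i<d. \<Sum>j<d. \<xi> i * Im (J $$ (i,j)) * \<eta> j)"
  define T where "T = (\<Sum>i<d. \<Sum>j<d. complex_of_real (\<xi> i * Im (J $$ (i,j)) * \<eta> j))"
  have Tt: "T = complex_of_real t" unfolding T_def t_def by (simp add: of_real_sum)
  define c where "c = exp (\<i> * T)"
  have c_cis: "c = cis t" unfolding c_def Tt by (simp add: cis_conv_exp)
  have cc: "cnj c * c = 1" "c * cnj c = 1" unfolding c_cis by (simp_all add: cis_cnj cis_mult)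
  have cnjc0: "cnj c = cis (- t)" unfolding c_cis by (rule cis_cnj)
  have cnjc: "cnj c = exp (- (\<i> * T))" unfolding cnjc0 Tt cis_conv_exp by simp
  have Jh: "J $$ (j,i) = cnj (J $$ (i,j))" if "i < d" "j < d" for i j
  proof -
    have "adj J = J" using J by (simp add: psd_def hermitian_def)
    then have "adj J $$ (j,i) = J $$ (j,i)" by (simp)
    then show ?thesis using that J by (simp)
  qed
  have AS: "(\<Sum>i<d. \<Sum>j<d. complex_of_real (\<xi> i * \<eta> j - \<eta> i * \<xi> j) * J $$ (j,i)) = -2 * \<i> * T"
    unfolding T_def by (rule antisym_sum[OF Jh])
  let ?L1 = "[\<lambda>k. - \<eta> k, \<lambda>k. - \<xi> k, \<xi>, \<eta>]"
  let ?L2 = "[\<lambda>k. - \<eta> k, \<lambda>k. - \<xi> k, \<lambda>k. \<xi> k + \<eta> k]"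
  let ?L3 = "[\<lambda>k. - (\<xi> k + \<eta> k), \<xi>, \<eta>]"
  let ?L4 = "[\<lambda>k. - (\<xi> k + \<eta> k), \<lambda>k. \<xi> k + \<eta> k]"
  have g1: "gauss_val d J ?L1 = 1" unfolding gauss_gF gF4 by (simp)
  have g4: "gauss_val d J ?L4 = 1" unfolding gauss_gF gF2 by (simp)
  have g2: "gauss_val d J ?L2 = cnj c"
  proof -
    have "(\<Sum>i<d. \<Sum>j<d. complex_of_real (gF ?L2 i j) * J $$ (j,i)) =
       (1/2) * (\<Sum>i<d. \<Sum>j<d. complex_of_real (\<xi> i * \<eta> j - \<eta> i * \<xi> j) * J $$ (j,i))"
      unfolding gF3a by (simp add: sum_distrib_left mult.assoc)
    also have "\<dots> = - (\<i> * T)" unfolding AS by (simp)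
    finally show ?thesis unfolding gauss_gF cnjc by (simp)
  qed
  have g3: "gauss_val d J ?L3 = c"
  proof -
    have "(\<Sum>i<d. \<Sum>j<d. complex_of_real (gF ?L3 i j) * J $$ (j,i)) =
       (- 1/2) * (\<Sum>i<d. \<Sum>j<d. complex_of_real (\<xi> i * \<eta> j - \<eta> i * \<xi> j) * J $$ (j,i))"
      unfolding gF3b by (simp add: sum_distrib_left mult.assoc)
    also have "\<dots> = \<i> * T" unfolding AS by (simp)
    finally show ?thesis unfolding gauss_gF c_def by (simp)
  qed
  define tr where "tr xs n = mtrace (\<rho> n * weyl_prod d (m n) (X n) xs)" for xs n
  have lim: "(\<lambda>n. tr xs n) \<longlonglongrightarrow> gauss_val d J xs" for xs
    using conv unfolding qconv_def tr_def by (blast)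
  have eq: "hs_norm (weyl d (m n) (X n) \<xi> * weyl d (m n) (X n) \<eta> * mat_sqrt (\<rho> n)
            - c \<cdot>\<^sub>m (weyl d (m n) (X n) (\<lambda>k. \<xi> k + \<eta> k) * mat_sqrt (\<rho> n)))
      = sqrt (Re (tr ?L1 n - c * tr ?L2 n - (cnj c * tr ?L3 n - cnj c * c * tr ?L4 n)))" for n
  proof -
    have rn: "\<rho> n \<in> carrier_mat (m n) (m n)" and pr: "psd (\<rho> n)" using rho[of n] by (auto simp: is_state_def)
    note R = mat_sqrt[OF rn pr]
    have hR: "adj (mat_sqrt (\<rho> n)) = mat_sqrt (\<rho> n)" using R by (simp add: psd_def hermitian_def)
    have obs': "\<And>i. i < d \<Longrightarrow> X n i \<in> carrier_mat (m n) (m n) \<and> hermitian (X n i)" using obs by (blast)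
    note wa = weyl_adj[OF obs']
    show ?thesis unfolding hs_norm_tr
      by (subst key_alg[OF rn conjunct1[OF R] weyl_carrier weyl_carrier weyl_carrier hR conjunct2[OF conjunct2[OF R]]])
         (simp add: wa tr_def weyl_prod_def)
  qed
  have "(\<lambda>n. sqrt (Re (tr ?L1 n - c * tr ?L2 n - (cnj c * tr ?L3 n - cnj c * c * tr ?L4 n))))
     \<longlonglongrightarrow> sqrt (Re (gauss_val d J ?L1 - c * gauss_val d J ?L2 - (cnj c * gauss_val d J ?L3 - cnj c * c * gauss_val d J ?L4)))"
    by (intro tendsto_intros lim)
  also have "sqrt (Re (gauss_val d J ?L1 - c * gauss_val d J ?L2 - (cnj c * gauss_val d J ?L3 - cnj c * c * gauss_val d J ?L4))) = 0"
    unfolding g1 g2 g3 g4 using cc by (simp)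
  finally have "(\<lambda>n. hs_norm (weyl d (m n) (X n) \<xi> * weyl d (m n) (X n) \<eta> * mat_sqrt (\<rho> n)
            - c \<cdot>\<^sub>m (weyl d (m n) (X n) (\<lambda>k. \<xi> k + \<eta> k) * mat_sqrt (\<rho> n)))) \<longlonglongrightarrow> 0"
    unfolding eq .
  then show ?thesis unfolding c_def T_def .
qed


end
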